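(* Let $X$ be a Banach space and $x\in S_X$. The following are equivalent: (1) $x$ is a Daugavet point (respectively, super Daugavet point, ccs Daugavet point); (2) $rx$ is a Daugavet point (respectively, super Daugavet point, ccs Daugavet point) for every $r\in[0,1]$; (3) $rx$ is a Daugavet point (respectively, super Daugavet point, ccs Daugavet point) for some $r\in(0,1)$.
   Context: For a Banach space $X$: slices of $B_X$ are non-empty sets $\{y\in B_X:\operatorname{Re}x^*(y)>\|x^*\|-\delta\}$ ($x^*\in X^*$, $\delta>0$); a ccs of $B_X$ is $\sum_{i=1}^n\lambda_iS_i$ with $\lambda_i\in(0,1]$, $\sum\lambda_i=1$, $S_i$ slices. For any $z\in B_X$ (not necessarily of norm one): $z$ is a Daugavet point (resp. super Daugavet point, ccs Daugavet point) if $\sup_{y\in A}\|z-y\|=\|z\|+1$ for every slice (resp. non-empty relatively weakly open subset, ccs) $A$ of $B_X$. *)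

theory Defs
  imports "HOL-Analysis.Analysis"
begin

definition slice :: "('a::real_normed_vector \<Rightarrow> real) \<Rightarrow> real \<Rightarrow> 'a set" where
  "slice f \<delta> = {y \<in> cball 0 1. f y > onorm f - \<delta>}"

definition is_slice :: "'a::real_normed_vector set \<Rightarrow> bool" where
  "is_slice S \<longleftrightarrow> (\<exists>f \<delta>. bounded_linear f \<and> \<delta> > 0 \<and> S = slice f \<delta> \<and> S \<noteq> {})"

definition weakly_open_set :: "'a::real_normed_vector set \<Rightarrow> bool" where
  "weakly_open_set U \<longleftrightarrow> (\<forall>x\<in>U. \<exists>(F::('a \<Rightarrow> real) set) e. finite F \<and> (\<forall>f\<in>F. bounded_linear f) \<and> e > 0 \<and>
      {y. \<forall>f\<in>F. \<bar>f y - f x\<bar> < e} \<subseteq> U)"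

definition is_rel_weakly_open_ball :: "'a::real_normed_vector set \<Rightarrow> bool" where
  "is_rel_weakly_open_ball A \<longleftrightarrow> A \<noteq> {} \<and> (\<exists>U. weakly_open_set U \<and> A = U \<inter> cball 0 1)"

definition is_ccs :: "'a::real_normed_vector set \<Rightarrow> bool" where
  "is_ccs A \<longleftrightarrow> (\<exists>(n::nat) (lam::nat \<Rightarrow> real) (S::nat \<Rightarrow> 'a set).
      n \<ge> 1 \<and> (\<forall>i<n. 0 < lam i \<and> lam i \<le> 1) \<and> (\<Sum>i<n. lam i) = 1 \<and>
      (\<forall>i<n. is_slice (S i)) \<and>
      A = {\<Sum>i<n. lam i *\<^sub>R y i | y. \<forall>i<n. y i \<in> S i})"

definition daugavet_point :: "'a::real_normed_vector \<Rightarrow> bool" where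
  "daugavet_point z \<longleftrightarrow> z \<in> cball 0 1 \<and>
     (\<forall>A. is_slice A \<longrightarrow> (SUP y\<in>A. norm (z - y)) = norm z + 1)"

definition super_daugavet_point :: "'a::real_normed_vector \<Rightarrow> bool" where
  "super_daugavet_point z \<longleftrightarrow> z \<in> cball 0 1 \<and>
     (\<forall>A. is_rel_weakly_open_ball A \<longrightarrow> (SUP y\<in>A. norm (z - y)) = norm z + 1)"

definition ccs_daugavet_point :: "'a::real_normed_vector \<Rightarrow> bool" where
  "ccs_daugavet_point z \<longleftrightarrow> z \<in> cball 0 1 \<and>
     (\<forall>A. is_ccs A \<longrightarrow> (SUP y\<in>A. norm (z - y)) = norm z + 1)"

end

theory Submission
  imports Defs
begin

lemma key_fwd:
  fixes x :: "'a::real_normed_vector"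
  assumes ne: "A \<noteq> {}" and sub: "A \<subseteq> cball 0 1" and nx: "norm x = 1"
    and r: "0 \<le> r" "r \<le> 1" and T: "(SUP y\<in>A. norm (x - y)) = 2"
  shows "(SUP y\<in>A. norm (r *\<^sub>R x - y)) = norm (r *\<^sub>R x) + 1"
proof -
  have nr: "norm (r *\<^sub>R x) = r" using nx r by simp
  have b1: "\<And>y. y \<in> A \<Longrightarrow> norm (r *\<^sub>R x - y) \<le> r + 1"
  proof -
    fix y assume "y \<in> A" then have "norm y \<le> 1" using sub by auto
    then show "norm (r *\<^sub>R x - y) \<le> r + 1" using norm_triangle_ineq4[of "r *\<^sub>R x" y] nr by linarith
  qed
  have bdd: "bdd_above ((\<lambda>y. norm (r *\<^sub>R x - y)) ` A)" using b1 by (auto intro!: bdd_aboveI)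
  have le: "(SUP y\<in>A. norm (r *\<^sub>R x - y)) \<le> r + 1" using b1 ne by (intro cSUP_least) auto
  have "2 \<le> (SUP y\<in>A. norm (r *\<^sub>R x - y)) + (1 - r)"
    unfolding T[symmetric]
  proof (rule cSUP_least[OF ne])
    fix y assume y: "y \<in> A"
    have "x - y = (r *\<^sub>R x - y) + (1 - r) *\<^sub>R x" by (simp add: algebra_simps)
    then have "norm (x - y) \<le> norm (r *\<^sub>R x - y) + norm ((1 - r) *\<^sub>R x)"
      by (metis norm_triangle_ineq)
    also have "norm ((1 - r) *\<^sub>R x) = 1 - r" using nx r by simp
    finally show "norm (x - y) \<le> (SUP y\<in>A. norm (r *\<^sub>R x - y)) + (1 - r)"
      using cSUP_upper[OF y bdd] by linarith
  qed
  then show ?thesis using le nr by linarith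
qed

lemma key_bwd:
  fixes x :: "'a::real_normed_vector"
  assumes ne: "A \<noteq> {}" and sub: "A \<subseteq> cball 0 1" and nx: "norm x = 1"
    and r: "0 < r" "r \<le> 1" and S: "(SUP y\<in>A. norm (r *\<^sub>R x - y)) = norm (r *\<^sub>R x) + 1"
  shows "(SUP y\<in>A. norm (x - y)) = 2"
proof -
  have nr: "norm (r *\<^sub>R x) = r" using nx r by simp
  have b1: "\<And>y. y \<in> A \<Longrightarrow> norm (x - y) \<le> 2"
  proof -
    fix y assume "y \<in> A" then have "norm y \<le> 1" using sub by auto
    then show "norm (x - y) \<le> 2" using norm_triangle_ineq4[of x y] nx by linarith
  qed
  have bdd: "bdd_above ((\<lambda>y. norm (x - y)) ` A)" using b1 by (auto intro!: bdd_aboveI)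
  have le: "(SUP y\<in>A. norm (x - y)) \<le> 2" using b1 ne by (intro cSUP_least) auto
  have "(SUP y\<in>A. norm (r *\<^sub>R x - y)) \<le> r * (SUP y\<in>A. norm (x - y)) + (1 - r)"
  proof (rule cSUP_least[OF ne])
    fix y assume y: "y \<in> A"
    then have ny: "norm y \<le> 1" using sub by auto
    have eq: "r *\<^sub>R x - y = r *\<^sub>R (x - y) - (1 - r) *\<^sub>R y" by (simp add: algebra_simps)
    have "norm (r *\<^sub>R x - y) \<le> norm (r *\<^sub>R (x - y)) + norm ((1 - r) *\<^sub>R y)"
      unfolding eq by (rule norm_triangle_ineq4)
    also have "norm (r *\<^sub>R (x - y)) = r * norm (x - y)" using r by simp
    also have "norm ((1 - r) *\<^sub>R y) = (1 - r) * norm y" using r by simp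
    also have "(1 - r) * norm y \<le> 1 - r" using ny r by (intro mult_left_le) auto
    also have "r * norm (x - y) \<le> r * (SUP y\<in>A. norm (x - y))"
      using cSUP_upper[OF y bdd] r by (intro mult_left_mono) auto
    finally show "norm (r *\<^sub>R x - y) \<le> r * (SUP y\<in>A. norm (x - y)) + (1 - r)" by simp
  qed
  then have "r + 1 \<le> r * (SUP y\<in>A. norm (x - y)) + (1 - r)" using S nr by linarith
  then have "r * 2 \<le> r * (SUP y\<in>A. norm (x - y))" by linarith
  then have "2 \<le> (SUP y\<in>A. norm (x - y))" using r(1) by (rule mult_left_le_imp_le)
  with le show ?thesis by linarith
qed

lemma generic:
  fixes x :: "'a::real_normed_vector"
  assumes H: "\<And>A. C A \<Longrightarrow> A \<noteq> {} \<and> A \<subseteq> cball 0 1" and nx: "norm x = 1"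
    and Dd: "\<And>z. D z \<longleftrightarrow> z \<in> cball 0 1 \<and> (\<forall>A. C A \<longrightarrow> (SUP y\<in>A. norm (z - y)) = norm z + 1)"
  shows "(D x \<longleftrightarrow> (\<forall>r\<in>{0..1}. D (r *\<^sub>R x))) \<and> (D x \<longleftrightarrow> (\<exists>r\<in>{0<..<1}. D (r *\<^sub>R x)))"
proof -
  have f: "D (r *\<^sub>R x)" if "D x" "0 \<le> r" "r \<le> 1" for r
  proof -
    have "r *\<^sub>R x \<in> cball 0 1" using nx that by simp
    moreover have "\<forall>A. C A \<longrightarrow> (SUP y\<in>A. norm (r *\<^sub>R x - y)) = norm (r *\<^sub>R x) + 1"
    proof (intro allI impI)
      fix A assume "C A"
      then show "(SUP y\<in>A. norm (r *\<^sub>R x - y)) = norm (r *\<^sub>R x) + 1"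
        using H[of A] that key_fwd[of A x r] nx unfolding Dd by auto
    qed
    ultimately show ?thesis unfolding Dd by blast
  qed
  have b: "D x" if "D (r *\<^sub>R x)" "0 < r" "r \<le> 1" for r
  proof -
    have "x \<in> cball 0 1" using nx by simp
    moreover have "\<forall>A. C A \<longrightarrow> (SUP y\<in>A. norm (x - y)) = norm x + 1"
    proof (intro allI impI)
      fix A assume "C A"
      then show "(SUP y\<in>A. norm (x - y)) = norm x + 1"
        using H[of A] that key_bwd[of A x r] nx unfolding Dd by auto
    qed
    ultimately show ?thesis unfolding Dd by blast
  qed
  have h: "(1/2::real) \<in> {0<..<1}" by simp
  have c1: "D x \<longleftrightarrow> (\<forall>r\<in>{0..1}. D (r *\<^sub>R x))"
  proof
    assume "D x" then show "\<forall>r\<in>{0..1}. D (r *\<^sub>R x)" using f by auto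
  next
    assume "\<forall>r\<in>{0..1}. D (r *\<^sub>R x)"
    then have "D (1 *\<^sub>R x)" by (simp del: scaleR_one)
    then show "D x" by simp
  qed
  have c2: "D x \<longleftrightarrow> (\<exists>r\<in>{0<..<1}. D (r *\<^sub>R x))"
  proof
    assume "D x" then have "D ((1/2) *\<^sub>R x)" using f by auto
    then show "\<exists>r\<in>{0<..<1}. D (r *\<^sub>R x)" using h by blast
  next
    assume "\<exists>r\<in>{0<..<1}. D (r *\<^sub>R x)"
    then obtain r where "r \<in> {0<..<1}" "D (r *\<^sub>R x)" by blast
    then show "D x" using b by auto
  qed
  show ?thesis using c1 c2 by blast
qed

lemma slice_ok: "is_slice A \<Longrightarrow> A \<noteq> {} \<and> A \<subseteq> cball 0 1"
  unfolding is_slice_def slice_def by auto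

lemma rwo_ok: "is_rel_weakly_open_ball A \<Longrightarrow> A \<noteq> {} \<and> A \<subseteq> cball 0 1"
  unfolding is_rel_weakly_open_ball_def by auto

lemma ccs_ok:
  fixes A :: "'a::real_normed_vector set"
  shows "is_ccs A \<Longrightarrow> A \<noteq> {} \<and> A \<subseteq> cball 0 1"
proof -
  assume "is_ccs A"
  then obtain n :: nat and lam :: "nat \<Rightarrow> real" and S :: "nat \<Rightarrow> 'a set" where n: "n \<ge> 1" and l: "\<forall>i<n. 0 < lam i \<and> lam i \<le> 1"
    and s1: "(\<Sum>i<n. lam i) = 1" and sl: "\<forall>i<n. is_slice (S i)"
    and A: "A = {\<Sum>i<n. lam i *\<^sub>R y i | y. \<forall>i<n. y i \<in> S i}"
    unfolding is_ccs_def by blast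
  have ok: "\<And>i. i < n \<Longrightarrow> S i \<noteq> {} \<and> S i \<subseteq> cball 0 1" using sl slice_ok by blast
  define y where "y = (\<lambda>i. SOME z. z \<in> S i)"
  have "\<forall>i<n. y i \<in> S i" using ok unfolding y_def by (meson ex_in_conv someI_ex)
  then have "A \<noteq> {}" using A by blast
  moreover have "A \<subseteq> cball 0 1"
  proof
    fix z assume "z \<in> A"
    then obtain y where z: "z = (\<Sum>i<n. lam i *\<^sub>R y i)" and y: "\<forall>i<n. y i \<in> S i" using A by blast
    have "norm z \<le> (\<Sum>i<n. norm (lam i *\<^sub>R y i))" using z norm_sum by blast
    also have "\<dots> \<le> (\<Sum>i<n. lam i)"
    proof (rule sum_mono)
      fix i assume "i \<in> {..<n}"
      then have i: "i < n" by simp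
      then have "y i \<in> cball 0 1" using y ok by blast
      then have "norm (y i) \<le> 1" by simp
      moreover have "0 < lam i" using i l by simp
      ultimately show "norm (lam i *\<^sub>R y i) \<le> lam i" by (simp add: mult_left_le)
    qed
    finally show "z \<in> cball 0 1" using s1 by simp
  qed
  ultimately show ?thesis by blast
qed

theorem mainTheorem17:
  fixes x :: "'a::banach"
  assumes "norm x = 1"
  shows "(daugavet_point x \<longleftrightarrow> (\<forall>r\<in>{0..1}. daugavet_point (r *\<^sub>R x))) \<and>
         (daugavet_point x \<longleftrightarrow> (\<exists>r\<in>{0<..<1}. daugavet_point (r *\<^sub>R x))) \<and>
         (super_daugavet_point x \<longleftrightarrow> (\<forall>r\<in>{0..1}. super_daugavet_point (r *\<^sub>R x))) \<and>
         (super_daugavet_point x \<longleftrightarrow> (\<exists>r\<in>{0<..<1}. super_daugavet_point (r *\<^sub>R x))) \<and>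
         (ccs_daugavet_point x \<longleftrightarrow> (\<forall>r\<in>{0..1}. ccs_daugavet_point (r *\<^sub>R x))) \<and>
         (ccs_daugavet_point x \<longleftrightarrow> (\<exists>r\<in>{0<..<1}. ccs_daugavet_point (r *\<^sub>R x)))"
proof -
  show ?thesis
    using generic[of is_slice x daugavet_point, OF slice_ok assms daugavet_point_def]
      generic[of is_rel_weakly_open_ball x super_daugavet_point, OF rwo_ok assms super_daugavet_point_def]
      generic[of is_ccs x ccs_daugavet_point, OF ccs_ok assms ccs_daugavet_point_def]
    by blast
qed

end
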